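(* Consider an $n$-level optimization problem with scalar variables $x_1,\dots,x_n\in\mathbb{R}$, and let $x_i^*(x_1,\dots,x_{i-1})$, $2\le i\le n$, be the (assumed unique and differentiable) best-response maps: $x_n^*(x_1,\dots,x_{n-1})=\operatorname{argmin}_{x_n} f_n(x_1,\dots,x_n)$ and, for $k=n-1,\dots,2$, $x_k^*(x_1,\dots,x_{k-1})=\operatorname{argmin}_{x_k} f_k(x_1,\dots,x_k,x_{k+1}^*,\dots,x_n^* )$ with the higher-index best responses evaluated recursively. Define $X_1(x_1)=x_1$ and $X_i(x_1)=x_i^*(x_1,X_2(x_1),\dots,X_{i-1}(x_1))$ for $i\ge 2$. Suppose there is $K\ge 0$ with $\big|\frac{\partial x_i^*}{\partial x_j}\big|\le K$ everywhere for all $1\le j<i\le n$. Let $M,N,S\ge 0$ be arbitrary constants and $J=\max\{M,N,K,S,1\}$. Then there is a constant $C$, independent of $i$ and $x_1$, such that for every $2\le i\le n$ and every $x_1\in\mathbb{R}$, $$\Big|\frac{\mathrm{d} X_i}{\mathrm{d} x_1}(x_1)\Big|\le C\big((i-1)J\big)^{i-1}.$$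
   Context: $\frac{\partial x_i^*}{\partial x_j}$ is the partial derivative of the best-response map $x_i^*$ with respect to its argument $x_j$; $\frac{\mathrm{d} X_i}{\mathrm{d} x_1}$ is the total derivative of the composite best response with respect to $x_1$. (In the paper $M,N,S$ are bounds on other derivatives; they play no role in the hypotheses here beyond entering $J$.) *)

theory Defs
  imports "HOL-Analysis.Analysis"
begin

text \<open>Points of R^n are encoded as functions nat => real; only the coordinates 1..n matter.
  A best-response map x_i^* is encoded as a function of such a point that only depends
  on the coordinates 1..i-1.\<close>

definition depends_only_on :: "nat set \<Rightarrow> ((nat \<Rightarrow> real) \<Rightarrow> real) \<Rightarrow> bool" where
  "depends_only_on A g \<longleftrightarrow> (\<forall>p q. (\<forall>j\<in>A. p j = q j) \<longrightarrow> g p = g q)"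

definition differentiable_first :: "nat \<Rightarrow> ((nat \<Rightarrow> real) \<Rightarrow> real) \<Rightarrow> (nat \<Rightarrow> real) \<Rightarrow> bool" where
  "differentiable_first m g p \<longleftrightarrow>
     (\<exists>D::nat \<Rightarrow> real. \<forall>e>0. \<exists>d>0. \<forall>h::nat \<Rightarrow> real.
        (\<forall>j. j \<notin> {1..m} \<longrightarrow> h j = 0) \<longrightarrow> sqrt (\<Sum>j=1..m. (h j)\<^sup>2) < d \<longrightarrow>
        \<bar>g (\<lambda>j. p j + h j) - g p - (\<Sum>j=1..m. D j * h j)\<bar> \<le> e * sqrt (\<Sum>j=1..m. (h j)\<^sup>2))"

definition partial :: "((nat \<Rightarrow> real) \<Rightarrow> real) \<Rightarrow> nat \<Rightarrow> (nat \<Rightarrow> real) \<Rightarrow> real" where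
  "partial g j p = deriv (\<lambda>t. g (p(j := t))) (p j)"

primrec fillup :: "(nat \<Rightarrow> (nat \<Rightarrow> real) \<Rightarrow> real) \<Rightarrow> nat \<Rightarrow> nat \<Rightarrow> (nat \<Rightarrow> real) \<Rightarrow> (nat \<Rightarrow> real)" where
  "fillup xs k 0 p = p"
| "fillup xs k (Suc s) p = (let q = fillup xs k s p in q(k + s + 1 := xs (k + s + 1) q))"

text \<open>Composite best responses: X_1(x_1) = x_1, X_i(x_1) = x_i^*(x_1, X_2(x_1), ..., X_{i-1}(x_1)).\<close>
definition Xcomp :: "(nat \<Rightarrow> (nat \<Rightarrow> real) \<Rightarrow> real) \<Rightarrow> nat \<Rightarrow> real \<Rightarrow> real" where
  "Xcomp xs i x1 = fillup xs 1 (i - 1) (\<lambda>j. if j = 1 then x1 else 0) i"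

end

theory Submission
  imports Defs
begin

lemma chain_first:
  fixes g :: "(nat \<Rightarrow> real) \<Rightarrow> real" and u :: "nat \<Rightarrow> real \<Rightarrow> real"
  assumes D: "\<forall>e>0. \<exists>d>0. \<forall>h::nat \<Rightarrow> real.
        (\<forall>j. j \<notin> {1..m} \<longrightarrow> h j = 0) \<longrightarrow> sqrt (\<Sum>j=1..m. (h j)\<^sup>2) < d \<longrightarrow>
        \<bar>g (\<lambda>j. (\<lambda>k. u k x) j + h j) - g (\<lambda>k. u k x) - (\<Sum>j=1..m. D j * h j)\<bar> \<le> e * sqrt (\<Sum>j=1..m. (h j)\<^sup>2)"
    and du: "\<forall>k\<in>{1..m}. (u k has_real_derivative dd k) (at x)"
    and const: "\<forall>k t. k \<notin> {1..m} \<longrightarrow> u k t = u k x"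
  shows "((\<lambda>t. g (\<lambda>k. u k t)) has_real_derivative (\<Sum>j=1..m. D j * dd j)) (at x)"
proof -
  define Q where "Q j t = (u j t - u j x) / (t - x)" for j t
  define NN where "NN t = sqrt (\<Sum>j=1..m. (u j t - u j x)\<^sup>2)" for t
  define SS where "SS t = sqrt (\<Sum>j=1..m. (Q j t)\<^sup>2)" for t
  define r where "r t = g (\<lambda>k. u k t) - g (\<lambda>k. u k x) - (\<Sum>j=1..m. D j * (u j t - u j x))" for t
  define L where "L = sqrt (\<Sum>j=1..m. (dd j)\<^sup>2) + 1"
  have Lpos: "L > 0" unfolding L_def by (simp add: add_nonneg_pos sum_nonneg)
  have Qlim: "\<forall>j\<in>{1..m}. (Q j \<longlongrightarrow> dd j) (at x)"
    using du unfolding Q_def by (simp add: has_field_derivative_iff)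
  have NS: "NN t = \<bar>t - x\<bar> * SS t" if "t \<noteq> x" for t
  proof -
    have "(\<Sum>j=1..m. (u j t - u j x)\<^sup>2) = (t - x)\<^sup>2 * (\<Sum>j=1..m. (Q j t)\<^sup>2)"
      unfolding sum_distrib_left Q_def using that
      by (intro sum.cong) (auto simp: power_divide field_simps)
    then show ?thesis unfolding NN_def SS_def by (simp add: real_sqrt_mult)
  qed
  have "(SS \<longlongrightarrow> sqrt (\<Sum>j=1..m. (dd j)\<^sup>2)) (at x)"
    unfolding SS_def
    by (intro tendsto_intros) (use Qlim in auto)
  hence evS: "eventually (\<lambda>t. SS t < L) (at x)"
    unfolding L_def by (intro order_tendstoD) auto
  have rlim: "((\<lambda>t. r t / (t - x)) \<longlongrightarrow> 0) (at x)"
  proof (rule tendstoI)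
    fix \<epsilon> :: real assume ep: "\<epsilon> > 0"
    define e where "e = \<epsilon> / (2 * L)"
    have e: "e > 0" using ep Lpos unfolding e_def by simp
    obtain d where d: "d > 0" and dprop: "\<forall>h::nat \<Rightarrow> real.
        (\<forall>j. j \<notin> {1..m} \<longrightarrow> h j = 0) \<longrightarrow> sqrt (\<Sum>j=1..m. (h j)\<^sup>2) < d \<longrightarrow>
        \<bar>g (\<lambda>j. (\<lambda>k. u k x) j + h j) - g (\<lambda>k. u k x) - (\<Sum>j=1..m. D j * h j)\<bar> \<le> e * sqrt (\<Sum>j=1..m. (h j)\<^sup>2)"
      using D e by blast
    have evx: "eventually (\<lambda>t. \<bar>t - x\<bar> < d / L) (at x)"
      using d Lpos by (auto simp: eventually_at dist_real_def intro!: exI[of _ "d / L"])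
    have evne: "eventually (\<lambda>t. t \<noteq> x) (at x)"
      by (simp add: eventually_at_filter)
    show "eventually (\<lambda>t. dist (r t / (t - x)) 0 < \<epsilon>) (at x)"
      using evx evne evS
    proof eventually_elim
      case (elim t)
      have SSnn: "SS t \<ge> 0" unfolding SS_def by (simp add: sum_nonneg)
      have ax: "\<bar>t - x\<bar> > 0" using elim by simp
      have "NN t = \<bar>t - x\<bar> * SS t" using NS elim by simp
      also have "\<dots> \<le> \<bar>t - x\<bar> * L" using elim SSnn by (intro mult_left_mono) auto
      also have "\<dots> < d" using elim Lpos by (simp add: pos_less_divide_eq)
      finally have NNd: "NN t < d" .
      define h where "h k = u k t - u k x" for k
      have h0: "\<forall>j. j \<notin> {1..m} \<longrightarrow> h j = 0" 
      proof (intro allI impI)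
        fix j assume "j \<notin> {1..m}"
        then have "u j t = u j x" using const by blast
        then show "h j = 0" unfolding h_def by simp
      qed
      have eqf: "(\<lambda>j. (\<lambda>k. u k x) j + h j) = (\<lambda>k. u k t)" unfolding h_def by auto
      have hN: "sqrt (\<Sum>j=1..m. (h j)\<^sup>2) = NN t" unfolding NN_def h_def by (rule refl)
      have rh: "r t = g (\<lambda>j. (\<lambda>k. u k x) j + h j) - g (\<lambda>k. u k x) - (\<Sum>j=1..m. D j * h j)"
        unfolding eqf unfolding r_def h_def by (rule refl)
      have "\<bar>r t\<bar> \<le> e * NN t"
        using dprop[THEN spec[of _ h], THEN mp, OF h0] NNd unfolding hN rh by blast
      also have "\<dots> \<le> e * (\<bar>t - x\<bar> * L)"
        using \<open>NN t = \<bar>t - x\<bar> * SS t\<close> elim SSnn e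
        by (intro mult_left_mono) (auto intro: mult_left_mono)
      finally have "\<bar>r t\<bar> \<le> e * L * \<bar>t - x\<bar>" by (simp add: ac_simps)
      hence "\<bar>r t\<bar> / \<bar>t - x\<bar> \<le> e * L" using ax by (simp add: pos_divide_le_eq)
      also have "e * L = \<epsilon> / 2" unfolding e_def using Lpos by simp
      finally have fin: "\<bar>r t\<bar> / \<bar>t - x\<bar> \<le> \<epsilon> / 2" .
      have "dist (r t / (t - x)) 0 = \<bar>r t\<bar> / \<bar>t - x\<bar>" by (simp add: dist_real_def abs_divide)
      then show ?case using fin ep by linarith
    qed
  qed
  have slim: "((\<lambda>t. \<Sum>j=1..m. D j * Q j t) \<longlongrightarrow> (\<Sum>j=1..m. D j * dd j)) (at x)"
    by (intro tendsto_intros) (use Qlim in auto)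
  have "((\<lambda>t. (\<Sum>j=1..m. D j * Q j t) + r t / (t - x)) \<longlongrightarrow> (\<Sum>j=1..m. D j * dd j) + 0) (at x)"
    by (intro tendsto_add slim rlim)
  moreover have "eventually (\<lambda>t. (\<Sum>j=1..m. D j * Q j t) + r t / (t - x) =
      (g (\<lambda>k. u k t) - g (\<lambda>k. u k x)) / (t - x)) (at x)"
  proof -
    have "(\<Sum>j=1..m. D j * Q j t) + r t / (t - x) = (g (\<lambda>k. u k t) - g (\<lambda>k. u k x)) / (t - x)"
      if "t \<noteq> x" for t
    proof -
      have "(\<Sum>j=1..m. D j * Q j t) = (\<Sum>j=1..m. D j * (u j t - u j x)) / (t - x)"
        unfolding Q_def sum_divide_distrib by (simp add: field_simps)
      then show ?thesis unfolding r_def using that by (simp add: field_simps)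
    qed
    then show ?thesis by (simp add: eventually_at_filter)
  qed
  ultimately have "((\<lambda>t. (g (\<lambda>k. u k t) - g (\<lambda>k. u k x)) / (t - x)) \<longlongrightarrow> (\<Sum>j=1..m. D j * dd j)) (at x)"
    using tendsto_cong by fastforce
  then show ?thesis by (simp add: has_field_derivative_iff)
qed

lemma partial_eq:
  fixes g :: "(nat \<Rightarrow> real) \<Rightarrow> real"
  assumes D: "\<forall>e>0. \<exists>d>0. \<forall>h::nat \<Rightarrow> real.
        (\<forall>j. j \<notin> {1..m} \<longrightarrow> h j = 0) \<longrightarrow> sqrt (\<Sum>j=1..m. (h j)\<^sup>2) < d \<longrightarrow>
        \<bar>g (\<lambda>j. p j + h j) - g p - (\<Sum>j=1..m. D j * h j)\<bar> \<le> e * sqrt (\<Sum>j=1..m. (h j)\<^sup>2)"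
    and j: "j \<in> {1..m}"
  shows "partial g j p = D j"
proof -
  define u where "u k t = (if k = j then t else p k)" for k t
  have pu: "(\<lambda>k. u k (p j)) = p" by (auto simp: u_def)
  have du: "\<forall>k\<in>{1..m}. (u k has_real_derivative (if k = j then 1 else 0)) (at (p j))"
  proof
    fix k assume "k \<in> {1..m}"
    show "(u k has_real_derivative (if k = j then 1 else 0)) (at (p j))"
    proof (cases "k = j")
      case True
      then have "u k = (\<lambda>t. t)" by (auto simp: u_def)
      then show ?thesis using True by (simp add: DERIV_ident)
    next
      case False
      then have "u k = (\<lambda>t. p k)" by (auto simp: u_def)
      then show ?thesis using False by simp
    qed
  qed
  have const: "\<forall>k t. k \<notin> {1..m} \<longrightarrow> u k t = u k (p j)" using j by (auto simp: u_def)
  have "((\<lambda>t. g (\<lambda>k. u k t)) has_real_derivative (\<Sum>i=1..m. D i * (if i = j then 1 else 0))) (at (p j))"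
  proof (rule chain_first[OF _ du const])
    have pu': "\<And>k. u k (p j) = p k" by (auto simp: u_def)
    show "\<forall>e>0. \<exists>d>0. \<forall>h::nat \<Rightarrow> real.
        (\<forall>j. j \<notin> {1..m} \<longrightarrow> h j = 0) \<longrightarrow> sqrt (\<Sum>j=1..m. (h j)\<^sup>2) < d \<longrightarrow>
        \<bar>g (\<lambda>i. (\<lambda>k. u k (p j)) i + h i) - g (\<lambda>k. u k (p j)) - (\<Sum>j=1..m. D j * h j)\<bar> \<le> e * sqrt (\<Sum>j=1..m. (h j)\<^sup>2)"
      unfolding pu' using D by simp
  qed
  moreover have "(\<Sum>i=1..m. D i * (if i = j then 1 else 0)) = D j"
    using j by (simp add: if_distrib cong: if_cong)
  moreover have "(\<lambda>t. g (\<lambda>k. u k t)) = (\<lambda>t. g (p(j := t)))"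
    by (auto simp: u_def fun_upd_def)
  ultimately have "((\<lambda>t. g (p(j := t))) has_real_derivative D j) (at (p j))" by simp
  then show ?thesis unfolding partial_def by (rule DERIV_imp_deriv)
qed

lemma fill_out: "j \<notin> {k+1..k+s} \<Longrightarrow> fillup xs k s p j = p j"
  by (induction s) (auto simp: Let_def)

lemma fill_mono: "j \<le> k + s \<Longrightarrow> fillup xs k (s + r) p j = fillup xs k s p j"
  by (induction r) (auto simp: Let_def)

lemma X1: "Xcomp xs 1 x1 = x1"
  by (simp add: Xcomp_def)

lemma Xpoint:
  assumes "2 \<le> i"
  shows "fillup xs 1 (i - 2) (\<lambda>j. if j = 1 then x1 else 0) = (\<lambda>k. if k \<in> {1..i-1} then Xcomp xs k x1 else 0)"
proof
  fix k
  show "fillup xs 1 (i - 2) (\<lambda>j. if j = 1 then x1 else 0) k = (if k \<in> {1..i-1} then Xcomp xs k x1 else 0)"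
  proof (cases "k \<in> {1..i-1}")
    case True
    then have e: "i - 2 = (k - 1) + (i - 1 - k)" using assms by auto
    have "fillup xs 1 (i - 2) (\<lambda>j. if j = 1 then x1 else 0) k = fillup xs 1 (k - 1) (\<lambda>j. if j = 1 then x1 else 0) k"
      unfolding e using True by (intro fill_mono) auto
    then show ?thesis using True by (simp add: Xcomp_def)
  next
    case False
    then have "k \<notin> {1+1..1+(i-2)}" using assms by auto
    moreover have "k \<noteq> 1" using False assms by auto
    ultimately have "fillup xs 1 (i - 2) (\<lambda>j. if j = 1 then x1 else 0) k = 0" by (simp add: fill_out)
    moreover have "(if k \<in> {1..i-1} then Xcomp xs k x1 else 0) = 0" using False by (rule if_not_P)
    ultimately show ?thesis by simp
  qed
qed

lemma Xrec:
  assumes "2 \<le> i"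
  shows "Xcomp xs i x1 = xs i (\<lambda>k. if k \<in> {1..i-1} then Xcomp xs k x1 else 0)"
proof -
  have e: "i - 1 = Suc (i - 2)" using assms by simp
  have "Xcomp xs i x1 = xs i (fillup xs 1 (i - 2) (\<lambda>j. if j = 1 then x1 else 0))"
    unfolding Xcomp_def e using assms by (simp add: Let_def)
  then show ?thesis using Xpoint[OF assms] by simp
qed

lemma geom: "(\<Sum>k=1..m. K * (1 + K) ^ (k - 1)) = (1 + K) ^ m - (1::real)"
  by (induction m) (auto simp: algebra_simps)

lemma Xderiv:
  fixes xs :: "nat \<Rightarrow> (nat \<Rightarrow> real) \<Rightarrow> real" and K :: real
  assumes xs_diff: "\<forall>i\<in>{2..n}. \<forall>p. differentiable_first (i - 1) (xs i) p"
    and K_nonneg: "K \<ge> 0"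
    and K_bound: "\<forall>i\<in>{2..n}. \<forall>j\<in>{1..<i}. \<forall>p. \<bar>partial (xs i) j p\<bar> \<le> K"
  shows "1 \<le> i \<Longrightarrow> i \<le> n \<Longrightarrow> \<exists>d. (Xcomp xs i has_real_derivative d) (at x1) \<and> \<bar>d\<bar> \<le> (1 + K) ^ (i - 1)"
proof (induction i arbitrary: x1 rule: less_induct)
  case (less i)
  show ?case
  proof (cases "i = 1")
    case True
    have "Xcomp xs 1 = (\<lambda>t. t)" using X1[of xs] by (intro ext) metis
    then show ?thesis using True by (auto intro!: exI[of _ 1] DERIV_ident)
  next
    case False
    then have i2: "2 \<le> i" using less.prems by simp
    have "\<forall>k\<in>{1..i-1}. \<exists>d. (Xcomp xs k has_real_derivative d) (at x1) \<and> \<bar>d\<bar> \<le> (1 + K) ^ (k - 1)"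
      using less.IH less.prems i2 by auto
    then obtain dd where dd: "\<forall>k\<in>{1..i-1}. (Xcomp xs k has_real_derivative dd k) (at x1) \<and> \<bar>dd k\<bar> \<le> (1 + K) ^ (k - 1)"
      by metis
    define u where "u k t = (if k \<in> {1..i-1} then Xcomp xs k t else 0)" for k t
    define p where "p = (\<lambda>k. u k x1)"
    have "differentiable_first (i - 1) (xs i) p" using xs_diff i2 less.prems by auto
    then obtain D where D: "\<forall>e>0. \<exists>d>0. \<forall>h::nat \<Rightarrow> real.
        (\<forall>j. j \<notin> {1..i-1} \<longrightarrow> h j = 0) \<longrightarrow> sqrt (\<Sum>j=1..i-1. (h j)\<^sup>2) < d \<longrightarrow>
        \<bar>xs i (\<lambda>j. p j + h j) - xs i p - (\<Sum>j=1..i-1. D j * h j)\<bar> \<le> e * sqrt (\<Sum>j=1..i-1. (h j)\<^sup>2)"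
      unfolding differentiable_first_def by blast
    have du: "\<forall>k\<in>{1..i-1}. (u k has_real_derivative dd k) (at x1)"
    proof
      fix k assume k: "k \<in> {1..i-1}"
      then have "u k = Xcomp xs k" by (auto simp: u_def)
      then show "(u k has_real_derivative dd k) (at x1)" using dd k by simp
    qed
    have const: "\<forall>k t. k \<notin> {1..i-1} \<longrightarrow> u k t = u k x1" by (auto simp: u_def)
    have der: "((\<lambda>t. xs i (\<lambda>k. u k t)) has_real_derivative (\<Sum>j=1..i-1. D j * dd j)) (at x1)"
      by (rule chain_first[OF _ du const]) (use D in \<open>simp add: p_def\<close>)
    have "(\<lambda>t. xs i (\<lambda>k. u k t)) = Xcomp xs i"
      using Xrec[OF i2] by (auto simp: u_def)
    with der have der': "(Xcomp xs i has_real_derivative (\<Sum>j=1..i-1. D j * dd j)) (at x1)" by simp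
    have Dj: "\<bar>D j\<bar> \<le> K" if "j \<in> {1..i-1}" for j
    proof -
      have "partial (xs i) j p = D j" by (rule partial_eq[OF D that])
      moreover have "\<bar>partial (xs i) j p\<bar> \<le> K" using K_bound i2 less.prems that by auto
      ultimately show ?thesis by simp
    qed
    have "\<bar>\<Sum>j=1..i-1. D j * dd j\<bar> \<le> (\<Sum>j=1..i-1. \<bar>D j * dd j\<bar>)" by (rule sum_abs)
    also have "\<dots> \<le> (\<Sum>j=1..i-1. K * (1 + K) ^ (j - 1))"
    proof (rule sum_mono)
      fix j assume j: "j \<in> {1..i-1}"
      have "\<bar>D j * dd j\<bar> = \<bar>D j\<bar> * \<bar>dd j\<bar>" by (simp add: abs_mult)
      also have "\<dots> \<le> K * (1 + K) ^ (j - 1)"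
        using Dj[OF j] dd j K_nonneg by (intro mult_mono) auto
      finally show "\<bar>D j * dd j\<bar> \<le> K * (1 + K) ^ (j - 1)" .
    qed
    also have "\<dots> = (1 + K) ^ (i - 1) - 1" by (rule geom)
    also have "\<dots> \<le> (1 + K) ^ (i - 1)" by simp
    finally show ?thesis using der' by blast
  qed
qed

theorem lemma7:
  fixes n :: nat
    and f :: "nat \<Rightarrow> (nat \<Rightarrow> real) \<Rightarrow> real"
    and xs :: "nat \<Rightarrow> (nat \<Rightarrow> real) \<Rightarrow> real"
    and K M N S J :: real
  assumes f_dom: "\<forall>k\<in>{2..n}. depends_only_on {1..n} (f k)"
    and xs_dom: "\<forall>i\<in>{2..n}. depends_only_on {1..i-1} (xs i)"
    and best_response: "\<forall>k\<in>{2..n}. \<forall>p t. t \<noteq> xs k p \<longrightarrow>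
            f k (fillup xs k (n - k) (p(k := xs k p))) < f k (fillup xs k (n - k) (p(k := t)))"
    and xs_diff: "\<forall>i\<in>{2..n}. \<forall>p. differentiable_first (i - 1) (xs i) p"
    and K_nonneg: "K \<ge> 0"
    and K_bound: "\<forall>i\<in>{2..n}. \<forall>j\<in>{1..<i}. \<forall>p. \<bar>partial (xs i) j p\<bar> \<le> K"
    and M_nonneg: "M \<ge> 0" and N_nonneg: "N \<ge> 0" and S_nonneg: "S \<ge> 0"
    and J_def: "J = Max {M, N, K, S, 1}"
  shows "\<exists>C. \<forall>i\<in>{2..n}. \<forall>x1. \<bar>deriv (Xcomp xs i) x1\<bar> \<le> C * ((real i - 1) * J) ^ (i - 1)"
proof (intro exI[of _ "(1 + K) ^ n"] ballI allI)
  fix i x1 assume i: "i \<in> {2..n}"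
  have J1: "J \<ge> 1" unfolding J_def by (intro Max_ge) auto
  obtain d where d: "(Xcomp xs i has_real_derivative d) (at x1)" and db: "\<bar>d\<bar> \<le> (1 + K) ^ (i - 1)"
    using Xderiv[OF xs_diff K_nonneg K_bound, of i x1] i by auto
  have "deriv (Xcomp xs i) x1 = d" using d by (rule DERIV_imp_deriv)
  moreover have "(1 + K) ^ (i - 1) \<le> (1 + K) ^ n"
    using i K_nonneg by (intro power_increasing) auto
  moreover have "1 \<le> ((real i - 1) * J) ^ (i - 1)"
  proof (rule one_le_power)
    have "real i - 1 \<ge> 1" using i by auto
    then show "1 \<le> (real i - 1) * J" using J1
      by (metis mult_mono' mult_1_left order_trans zero_le_one)
  qed
  moreover have "(1 + K) ^ n \<ge> 0" using K_nonneg by simp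
  ultimately show "\<bar>deriv (Xcomp xs i) x1\<bar> \<le> (1 + K) ^ n * ((real i - 1) * J) ^ (i - 1)"
    using db by (smt (verit) mult_left_mono mult_cancel_left1)
qed

end
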